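(* Let $(\Gamma,M)$ be an E-GCM graph, let $\lambda$ be a strongly dominant position, and let $(\gamma_{i_1},\gamma_{i_2},\dots)$ be any game sequence for a numbers game played from $\lambda$. For each $j$ let $\beta_j:=s_{i_1}\cdots s_{i_{j-1}}.\alpha_{i_j}$ (a positive root), so that $\phi_{\beta_j}$ is the positive root functional at node $\gamma_{i_j}$. Then for all $k\ge1$ and all $1\le j<k$, $\phi_{\beta_k}\ne\phi_{\beta_j}$.
   Context: E-GCM $M=(M_{ij})_{i,j\in I_n}$: real, $M_{ii}=2$, $M_{ij}\le0$ ($i\ne j$), $M_{ij}\ne0\iff M_{ji}\ne0$, nonzero $M_{ij}M_{ji}$ either $\ge4$ or $=4\cos^2(\pi/m)$ with $m\ge3$ integer; nodes $\gamma_i$, adjacent iff $M_{ij}\ne0$. Positions $\lambda\in\mathbb{R}^n$, strongly dominant if all $\lambda_i>0$; firing $\gamma_i$ allowed iff $\lambda_i>0$ and replaces $\lambda_j$ by $\lambda_j-M_{ij}\lambda_i$; a game sequence is the sequence of nodes fired in a numbers game that keeps firing nodes with positive population while any exist. $W$: Coxeter group with generators $s_i$, $s_i^2=e$, $(s_is_j)^{m_{ij}}=e$, $m_{ij}=k$ if $M_{ij}M_{ji}=4\cos^2(\pi/k)$ ($k\ge2$), $m_{ij}=\infty$ if $M_{ij}M_{ji}\ge4$. $W$ acts on real $V$ with basis $(\alpha_i)$ via $s_i.\alpha_j=\alpha_j-M_{ij}\alpha_i$; roots are the elements $w.\alpha_i$. For a root $\alpha=\sum c_i\alpha_i$, the root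 functional is $\phi_\alpha(x_1,\dots,x_n)=\sum c_ix_i$ (indeterminates $x_i$); it is positive if all $c_i\ge 0$. *)

theory Defs
  imports Complex_Main "HOL-Library.Extended_Nat"
begin

text \<open>Index set I_n is rendered as {..<n} (0-based). Matrices, positions and
 vectors of V (coefficients w.r.t. the basis alpha_i) are functions on nat,
 only their values on {..<n} matter.\<close>

definition is_EGCM :: "nat \<Rightarrow> (nat \<Rightarrow> nat \<Rightarrow> real) \<Rightarrow> bool" where
  "is_EGCM n M \<longleftrightarrow>
     (\<forall>i<n. M i i = 2) \<and>
     (\<forall>i<n. \<forall>j<n. i \<noteq> j \<longrightarrow> M i j \<le> 0) \<and>
     (\<forall>i<n. \<forall>j<n. M i j \<noteq> 0 \<longleftrightarrow> M j i \<noteq> 0) \<and>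
     (\<forall>i<n. \<forall>j<n. M i j * M j i \<noteq> 0 \<longrightarrow>
         (M i j * M j i \<ge> 4 \<or> (\<exists>m::nat. m \<ge> 3 \<and> M i j * M j i = 4 * (cos (pi / real m))^2)))"

definition strongly_dominant :: "nat \<Rightarrow> (nat \<Rightarrow> real) \<Rightarrow> bool" where
  "strongly_dominant n lam \<longleftrightarrow> (\<forall>i<n. lam i > 0)"

definition fire :: "(nat \<Rightarrow> nat \<Rightarrow> real) \<Rightarrow> nat \<Rightarrow> (nat \<Rightarrow> real) \<Rightarrow> (nat \<Rightarrow> real)" where
  "fire M i lam = (\<lambda>j. lam j - M i j * lam i)"

primrec play :: "(nat \<Rightarrow> nat \<Rightarrow> real) \<Rightarrow> (nat \<Rightarrow> real) \<Rightarrow> (nat \<Rightarrow> nat) \<Rightarrow> nat \<Rightarrow> (nat \<Rightarrow> real)" where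
  "play M lam s 0 = lam"
| "play M lam s (Suc k) = fire M (s k) (play M lam s k)"

definition game_sequence ::
  "nat \<Rightarrow> (nat \<Rightarrow> nat \<Rightarrow> real) \<Rightarrow> (nat \<Rightarrow> real) \<Rightarrow> enat \<Rightarrow> (nat \<Rightarrow> nat) \<Rightarrow> bool" where
  "game_sequence n M lam L s \<longleftrightarrow>
     (\<forall>k. enat k < L \<longrightarrow> s k < n \<and> play M lam s k (s k) > 0) \<and>
     (\<forall>N. L = enat N \<longrightarrow> (\<forall>i<n. play M lam s N i \<le> 0))"

definition simple_root :: "nat \<Rightarrow> (nat \<Rightarrow> real)" where
  "simple_root i = (\<lambda>j. if j = i then 1 else 0)"

definition refl_act :: "nat \<Rightarrow> (nat \<Rightarrow> nat \<Rightarrow> real) \<Rightarrow> nat \<Rightarrow> (nat \<Rightarrow> real) \<Rightarrow> (nat \<Rightarrow> real)" where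
  "refl_act n M i c = c(i := c i - (\<Sum>j<n. M i j * c j))"

text \<open>beta_k = s_{s 0} s_{s 1} ... s_{s (k-1)} . alpha_{s k}  (0-based indexing).\<close>
definition beta :: "nat \<Rightarrow> (nat \<Rightarrow> nat \<Rightarrow> real) \<Rightarrow> (nat \<Rightarrow> nat) \<Rightarrow> nat \<Rightarrow> (nat \<Rightarrow> real)" where
  "beta n M s k = foldr (\<lambda>t v. refl_act n M (s t) v) [0..<k] (simple_root (s k))"

text \<open>Root functional phi_alpha(x_1..x_n) = sum c_i x_i, as a function of the
 indeterminates (equality of such linear forms = equality of coefficients).\<close>
definition root_functional :: "nat \<Rightarrow> (nat \<Rightarrow> real) \<Rightarrow> ((nat \<Rightarrow> real) \<Rightarrow> real)" where
  "root_functional n c = (\<lambda>x. \<Sum>i<n. c i * x i)"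

end

theory Submission
  imports Defs
begin


primrec act :: "nat \<Rightarrow> (nat \<Rightarrow> nat \<Rightarrow> real) \<Rightarrow> nat list \<Rightarrow> (nat \<Rightarrow> real) \<Rightarrow> (nat \<Rightarrow> real)" where
  "act n M [] v = v"
| "act n M (i # xs) v = refl_act n M i (act n M xs v)"

definition cr :: "nat \<Rightarrow> (nat \<Rightarrow> nat \<Rightarrow> real) \<Rightarrow> nat \<Rightarrow> (nat \<Rightarrow> real) \<Rightarrow> real" where
  "cr n M i v = (\<Sum>j<n. M i j * v j)"

definition lc :: "real \<Rightarrow> (nat \<Rightarrow> real) \<Rightarrow> real \<Rightarrow> (nat \<Rightarrow> real) \<Rightarrow> (nat \<Rightarrow> real)" where
  "lc a u b v = (\<lambda>l. a * u l + b * v l)"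

definition nonneg :: "(nat \<Rightarrow> real) \<Rightarrow> bool" where
  "nonneg v \<longleftrightarrow> (\<forall>i. 0 \<le> v i)"

definition nonpos :: "(nat \<Rightarrow> real) \<Rightarrow> bool" where
  "nonpos v \<longleftrightarrow> (\<forall>i. v i \<le> 0)"

lemma refl_act_cr: "refl_act n M i v = v(i := v i - cr n M i v)"
  by (simp add: refl_act_def cr_def)

lemma act_append: "act n M (xs @ ys) v = act n M xs (act n M ys v)"
  by (induction xs) auto

lemma cr_lc: "cr n M i (lc a u b v) = a * cr n M i u + b * cr n M i v"
  by (simp add: cr_def lc_def sum.distrib sum_distrib_left algebra_simps)

lemma refl_act_lc: "refl_act n M i (lc a u b v) = lc a (refl_act n M i u) b (refl_act n M i v)"
  by (rule ext) (simp add: refl_act_cr cr_lc[unfolded lc_def] lc_def algebra_simps)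

lemma act_lc: "act n M xs (lc a u b v) = lc a (act n M xs u) b (act n M xs v)"
  by (induction xs) (auto simp: refl_act_lc)

lemma act_neg: "act n M xs (\<lambda>l. - v l) = (\<lambda>l. - act n M xs v l)"
proof -
  have "act n M xs (lc (-1) v 0 v) = lc (-1) (act n M xs v) 0 (act n M xs v)" by (rule act_lc)
  then show ?thesis by (simp add: lc_def)
qed

locale egcm =
  fixes n :: nat and M :: "nat \<Rightarrow> nat \<Rightarrow> real"
  assumes E: "is_EGCM n M"
begin

abbreviation S where "S i \<equiv> refl_act n M i"
abbreviation A where "A \<equiv> act n M"
definition wd :: "nat list \<Rightarrow> bool" where "wd xs \<longleftrightarrow> set xs \<subseteq> {..<n}"

lemma Mdiag: "i < n \<Longrightarrow> M i i = 2" using E by (simp add: is_EGCM_def)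

lemma cr_upd: "i < n \<Longrightarrow> cr n M i (v(i := x)) = cr n M i v + M i i * (x - v i)"
proof -
  assume i: "i < n"
  have "cr n M i (v(i := x)) = (\<Sum>j<n. M i j * v j + (if j = i then M i i * (x - v i) else 0))"
    by (auto simp: cr_def algebra_simps intro!: sum.cong)
  also have "\<dots> = cr n M i v + M i i * (x - v i)"
    using i by (simp add: sum.distrib cr_def)
  finally show ?thesis .
qed

lemma SS: "i < n \<Longrightarrow> S i (S i v) = v"
  by (rule ext) (simp add: refl_act_cr cr_upd Mdiag)

lemma act_rev: "wd xs \<Longrightarrow> A (rev xs) (A xs v) = v"
  by (induction xs arbitrary: v) (auto simp: wd_def act_append SS)

lemma act_inj: "wd xs \<Longrightarrow> A xs u = A xs v \<Longrightarrow> u = v"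
  by (metis act_rev)

lemma S_simple: "i < n \<Longrightarrow> S i (simple_root i) = (\<lambda>l. - simple_root i l)"
  by (rule ext) (simp add: refl_act_cr cr_def simple_root_def Mdiag if_distrib sum.delta cong: if_cong)

end



primrec altw :: "nat \<Rightarrow> nat \<Rightarrow> nat \<Rightarrow> nat list" where
  "altw s s' 0 = []"
| "altw s s' (Suc k) = (if even k then s' else s) # altw s s' k"

fun cheb :: "real \<Rightarrow> nat \<Rightarrow> real" where
  "cheb c 0 = 0"
| "cheb c (Suc 0) = 1"
| "cheb c (Suc (Suc k)) = c * cheb c (Suc k) - cheb c k"

lemma cheb_ge2: "c \<ge> 2 \<Longrightarrow> cheb c k \<le> cheb c (Suc k) \<and> 0 \<le> cheb c k"
proof (induction k rule: nat_less_induct)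
  case (1 k)
  show ?case
  proof (cases k)
    case 0 then show ?thesis by simp
  next
    case (Suc k')
    then have ih: "cheb c k' \<le> cheb c (Suc k') \<and> 0 \<le> cheb c k'" using 1 by auto
    have "cheb c (Suc (Suc k')) - cheb c (Suc k') = (c - 2) * cheb c (Suc k') + (cheb c (Suc k') - cheb c k')"
      by (simp add: algebra_simps)
    moreover have "(c - 2) * cheb c (Suc k') \<ge> 0" using ih 1(2) by simp
    ultimately show ?thesis using ih Suc by simp
  qed
qed

lemma cheb_sin:
  assumes "sin t \<noteq> 0"
  shows "cheb (2 * cos t) k = sin (real k * t) / sin t"
proof -
  have "cheb (2 * cos t) k = sin (real k * t) / sin t \<and> cheb (2 * cos t) (Suc k) = sin (real (Suc k) * t) / sin t"
  proof (induction k)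
    case 0 then show ?case using assms by simp
  next
    case (Suc k)
    have e: "sin (real (Suc (Suc k)) * t) = 2 * cos t * sin (real (Suc k) * t) - sin (real k * t)"
    proof -
      have g: "sin (x + t) = 2 * cos t * sin x - sin (x - t)" for x
        by (simp add: sin_add sin_diff algebra_simps)
      have h1: "real (Suc (Suc k)) * t = real (Suc k) * t + t" by (simp add: algebra_simps)
      have h2: "real k * t = real (Suc k) * t - t" by (simp add: algebra_simps)
      show ?thesis unfolding h1 h2 by (rule g)
    qed
    have "cheb (2 * cos t) (Suc (Suc k)) = 2 * cos t * cheb (2 * cos t) (Suc k) - cheb (2 * cos t) k" by simp
    also have "\<dots> = 2 * cos t * (sin (real (Suc k) * t) / sin t) - sin (real k * t) / sin t"
      using Suc by simp
    also have "\<dots> = (2 * cos t * sin (real (Suc k) * t) - sin (real k * t)) / sin t"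
      by (simp add: diff_divide_distrib)
    also have "\<dots> = sin (real (Suc (Suc k)) * t) / sin t" by (simp only: e)
    finally show ?case using Suc by simp
  qed
  then show ?thesis by simp
qed




lemma lc_comm: "lc x u y v = lc y v x u" by (auto simp: lc_def)

context egcm begin

lemma cr_simple: "j < n \<Longrightarrow> cr n M i (simple_root j) = M i j"
  by (simp add: cr_def simple_root_def if_distrib sum.delta cong: if_cong)

lemma S_pair1:
  assumes "i \<noteq> j" "i < n" "j < n"
  shows "S i (lc x (simple_root i) y (simple_root j)) = lc (- x - M i j * y) (simple_root i) y (simple_root j)"
proof -
  have "cr n M i (lc x (simple_root i) y (simple_root j)) = 2 * x + M i j * y"
    using assms by (simp add: cr_lc cr_simple Mdiag)
  then show ?thesis using assms by (intro ext) (auto simp: refl_act_cr lc_def simple_root_def)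
qed

lemma S_pair2:
  assumes "i \<noteq> j" "i < n" "j < n"
  shows "S j (lc x (simple_root i) y (simple_root j)) = lc x (simple_root i) (- y - M j i * x) (simple_root j)"
  using S_pair1[of j i y x] assms by (simp add: lc_comm)

lemma alt_vec:
  assumes "s \<noteq> s'" "s < n" "s' < n" "c > 0" "c * c = M s s' * M s' s"
  shows "A (altw s s' k) (simple_root s) =
    (if even k then lc (cheb c (Suc k)) (simple_root s) (- M s' s / c * cheb c k) (simple_root s')
     else lc (cheb c k) (simple_root s) (- M s' s / c * cheb c (Suc k)) (simple_root s'))"
proof (induction k)
  case 0
  then show ?case by (auto simp: lc_def)
next
  case (Suc k)
  show ?case
  proof (cases "even k")
    case True
    have "A (altw s s' (Suc k)) (simple_root s) = S s' (A (altw s s' k) (simple_root s))"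
      using True by simp
    also have "\<dots> = lc (cheb c (Suc k)) (simple_root s) (- (- M s' s / c * cheb c k) - M s' s * cheb c (Suc k)) (simple_root s')"
      using Suc True assms by (simp add: S_pair2)
    also have "- (- M s' s / c * cheb c k) - M s' s * cheb c (Suc k) = - M s' s / c * cheb c (Suc (Suc k))"
      using assms(4) by (simp add: field_simps)
    finally show ?thesis using True by simp
  next
    case False
    have "A (altw s s' (Suc k)) (simple_root s) = S s (A (altw s s' k) (simple_root s))"
      using False by simp
    also have "\<dots> = lc (- cheb c k - M s s' * (- M s' s / c * cheb c (Suc k))) (simple_root s) (- M s' s / c * cheb c (Suc k)) (simple_root s')"
      using Suc False assms by (simp add: S_pair1)
    also have "- cheb c k - M s s' * (- M s' s / c * cheb c (Suc k)) = cheb c (Suc (Suc k))"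
    proof -
      have "M s s' * (- M s' s / c * cheb c (Suc k)) = - (c * c) / c * cheb c (Suc k)"
        using assms(5) by (simp add: field_simps)
      also have "\<dots> = - c * cheb c (Suc k)" using assms(4) by simp
      finally show ?thesis by simp
    qed
    finally show ?thesis using False by simp
  qed
qed

end



lemma altw_swap: "altw s' s (Suc k) = altw s s' k @ [s]"
  by (induction k) auto

context egcm begin

lemma cr_upd2: "j < n \<Longrightarrow> cr n M i (v(j := x)) = cr n M i v + M i j * (x - v j)"
proof -
  assume j: "j < n"
  have "cr n M i (v(j := x)) = (\<Sum>l<n. M i l * v l + (if l = j then M i j * (x - v j) else 0))"
    by (auto simp: cr_def algebra_simps intro!: sum.cong)
  also have "\<dots> = cr n M i v + M i j * (x - v j)"
    using j by (simp add: sum.distrib cr_def)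
  finally show ?thesis .
qed

lemma braid2:
  assumes "s \<noteq> s'" "s < n" "s' < n" "M s s' = 0" "M s' s = 0"
  shows "S s (S s' v) = S s' (S s v)"
  using assms by (intro ext) (auto simp: refl_act_cr cr_upd2)

lemma fix_I:
  assumes "cr n M s v = 0" "cr n M s' v = 0" "set x \<subseteq> {s, s'}"
  shows "A x v = v"
  using assms(3)
proof (induction x)
  case Nil then show ?case by simp
next
  case (Cons i x)
  then have "A (i # x) v = S i v" by simp
  also have "\<dots> = v" using Cons(2) assms(1,2) by (auto simp: refl_act_cr)
  finally show ?case .
qed

lemma braid_half:
  assumes "s \<noteq> s'" "s < n" "s' < n" "m \<ge> 3" "M s s' * M s' s = 4 * (cos (pi / real m))^2"
  shows "A (altw s s' m) (simple_root s) = A (altw s' s m) (simple_root s)"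
proof -
  define t where "t = pi / real m"
  define c where "c = 2 * cos t"
  have t0: "0 < t" and t1: "t < pi / 2" using assms(4) by (auto simp: t_def field_simps)
  have c0: "c > 0" unfolding c_def using t0 t1 by (simp add: cos_gt_zero)
  have cc: "c * c = M s s' * M s' s" using assms(5) by (simp add: c_def t_def power2_eq_square)
  have st: "sin t \<noteq> 0" using t0 t1 sin_gt_zero[of t] by linarith
  have mt: "real m * t = pi" using assms(4) by (simp add: t_def)
  have cm: "cheb c m = 0" unfolding c_def using st mt by (simp add: cheb_sin)
  have cm1: "cheb c (Suc m) = -1" unfolding c_def using st mt
    by (simp add: cheb_sin distrib_right sin_add)
  obtain k where mk: "m = Suc k" using assms(4) by (cases m) auto
  have kt: "real k * t = pi - t" using mt mk by (simp add: algebra_simps)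
  have ck: "cheb c k = 1" unfolding c_def using st by (simp add: cheb_sin kt)
  have sw: "A (altw s' s m) (simple_root s) = (\<lambda>l. - A (altw s s' k) (simple_root s) l)"
    unfolding mk altw_swap using assms by (simp add: act_append S_simple act_neg)
  have v1: "A (altw s s' m) (simple_root s) = (if even m then lc (cheb c (Suc m)) (simple_root s) (- M s' s / c * cheb c m) (simple_root s')
     else lc (cheb c m) (simple_root s) (- M s' s / c * cheb c (Suc m)) (simple_root s'))"
    by (rule alt_vec[OF assms(1-3) c0 cc])
  have v2: "A (altw s s' k) (simple_root s) = (if even k then lc (cheb c (Suc k)) (simple_root s) (- M s' s / c * cheb c k) (simple_root s')
     else lc (cheb c k) (simple_root s) (- M s' s / c * cheb c (Suc k)) (simple_root s'))"
    by (rule alt_vec[OF assms(1-3) c0 cc])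
  show ?thesis unfolding sw v1 v2 using cm cm1 ck mk by (auto simp: lc_def)
qed


lemma set_altw: "set (altw s s' k) \<subseteq> {s, s'}"
  by (induction k) auto

lemma cr_lin3: "cr n M i (\<lambda>l. v l - X * u l - Y * w l) = cr n M i v - X * cr n M i u - Y * cr n M i w"
  by (simp add: cr_def sum_subtractf sum_distrib_left sum.distrib algebra_simps)

lemma braid_cos:
  assumes "s \<noteq> s'" "s < n" "s' < n" "m \<ge> 3" "M s s' * M s' s = 4 * (cos (pi / real m))^2"
  shows "A (altw s s' m) v = A (altw s' s m) v"
proof -
  have h1: "A (altw s s' m) (simple_root s) = A (altw s' s m) (simple_root s)"
    by (rule braid_half[OF assms])
  have h2: "A (altw s' s m) (simple_root s') = A (altw s s' m) (simple_root s')"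
    by (rule braid_half) (use assms in \<open>auto simp: mult.commute\<close>)
  have t0: "0 < pi / real m" and t1: "pi / real m < pi / 2" using assms(4) by (auto simp: field_simps)
  have t2: "pi / real m \<le> pi" using t1 pi_gt_zero by linarith
  have "cos (pi / real m) < cos 0" by (rule cos_monotone_0_pi) (use t0 t2 in auto)
  then have "cos (pi / real m) < 1" by simp
  moreover have "cos (pi / real m) > 0" using t0 t1 by (simp add: cos_gt_zero)
  ultimately have "(cos (pi / real m))^2 < 1" by (simp add: power_less_one_iff abs_less_iff)
  then have D: "4 - M s s' * M s' s > 0" using assms(5) by simp
  define D where "D = 4 - M s s' * M s' s"
  define p where "p = cr n M s v"
  define q where "q = cr n M s' v"
  define X where "X = (2 * p - M s s' * q) / D"
  define Y where "Y = (2 * q - M s' s * p) / D"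
  define v' where "v' = (\<lambda>l. v l - X * simple_root s l - Y * simple_root s' l)"
  have Dp: "D > 0" using D D_def by simp
  have "cr n M s v' = p - X * 2 - Y * M s s'"
    using assms by (simp add: v'_def cr_lin3 cr_simple Mdiag p_def)
  also have "\<dots> = 0" using Dp unfolding X_def Y_def D_def by (simp add: field_simps)
  finally have z1: "cr n M s v' = 0" .
  have "cr n M s' v' = q - X * M s' s - Y * 2"
    using assms by (simp add: v'_def cr_lin3 cr_simple Mdiag q_def)
  also have "\<dots> = 0" using Dp unfolding X_def Y_def D_def by (simp add: field_simps)
  finally have z2: "cr n M s' v' = 0" .
  have vd: "v = lc 1 v' 1 (lc X (simple_root s) Y (simple_root s'))"
    by (auto simp: lc_def v'_def)
  have f1: "A (altw s s' m) v' = v'" by (rule fix_I[OF z1 z2 set_altw])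
  have f2: "A (altw s' s m) v' = v'" by (rule fix_I[OF z1 z2]) (use set_altw[of s' s m] in auto)
  show ?thesis
    by (subst (1 2) vd) (simp only: act_lc f1 f2 h1 h2)
qed

end



lemma altw_split: "\<exists>p. altw s s' (m + j) = p @ altw s s' m"
proof (induction j)
  case 0 then show ?case by simp
next
  case (Suc j)
  then obtain p where "altw s s' (m + j) = p @ altw s s' m" by blast
  then show ?case by (intro exI[of _ "(if even (m + j) then s' else s) # p"]) simp
qed

lemma length_altw[simp]: "length (altw s s' k) = k" by (induction k) auto

lemma alt_char:
  assumes "set x \<subseteq> {s, s'}" "\<forall>p t q. x \<noteq> p @ t # t # q" "x = [] \<or> last x = s'"
  shows "x = altw s s' (length x)"
  using assms
proof (induction x)
  case Nil then show ?case by simp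
next
  case (Cons t x)
  show ?case
  proof (cases "x = []")
    case True then show ?thesis using Cons by simp
  next
    case False
    have nd: "\<forall>p t q. x \<noteq> p @ t # t # q"
    proof (intro allI notI)
      fix p u q assume "x = p @ u # u # q"
      then have "t # x = (t # p) @ u # u # q" by simp
      then show False using Cons(3) by blast
    qed
    have "x = altw s s' (length x)" using Cons False nd by auto
    moreover obtain k where k: "length x = Suc k" using False by (cases x) auto
    ultimately have xe: "x = (if even k then s' else s) # altw s s' k" by simp
    have "t \<noteq> hd x"
    proof
      assume "t = hd x"
      then have "t # x = [] @ t # t # tl x" using False by simp
      then show False using Cons(3) by blast
    qed
    then have "t = (if even k then s else s')" using Cons(2) xe by auto
    then show ?thesis using xe k by simp
  qed
qed

context egcm begin

lemma braid_short:
  assumes "s < n" "m \<ge> 1" "\<And>v. A (altw s s' m) v = A (altw s' s m) v" "k \<ge> m"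
  shows "\<exists>y. set y \<subseteq> {s, s'} \<and> length y < k \<and> A y = (\<lambda>v. A (altw s s' k) (S s v))"
proof -
  obtain j where kj: "k = m + j" using assms(4) le_Suc_ex by blast
  obtain p where p: "altw s s' k = p @ altw s s' m" using altw_split kj by blast
  obtain m' where m': "m = Suc m'" using assms(2) by (cases m) auto
  have sp: "set (p @ altw s s' m') \<subseteq> {s, s'}" using set_altw[of s s' k] set_altw[of s s' m'] p by auto
  have "length (altw s s' k) = length (p @ altw s s' m)" using p by simp
  then have "k = length p + m" by simp
  then have lp: "length (p @ altw s s' m') < k" using m' by simp
  have eq: "A (p @ altw s s' m') = (\<lambda>v. A (altw s s' k) (S s v))"
  proof
    fix v
    have "A (altw s s' k) (S s v) = A p (A (altw s' s m) (S s v))" using p assms(3) by (simp add: act_append)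
    also have "\<dots> = A p (A (altw s s' m') (S s (S s v)))" unfolding m' altw_swap by (simp add: act_append)
    also have "\<dots> = A (p @ altw s s' m') v" using assms(1) by (simp add: SS act_append)
    finally show "A (p @ altw s s' m') v = A (altw s s' k) (S s v)" by simp
  qed
  show ?thesis by (rule exI[of _ "p @ altw s s' m'"]) (intro conjI sp lp eq)
qed

lemma R2:
  assumes ss: "s \<noteq> s'" "s < n" "s' < n" and xI: "set x \<subseteq> {s, s'}"
    and ha: "\<And>y. set y \<subseteq> {s, s'} \<Longrightarrow> A y = A x \<Longrightarrow> length x \<le> length y"
    and hb: "\<And>y. set y \<subseteq> {s, s'} \<Longrightarrow> A y = (\<lambda>v. A x (S s v)) \<Longrightarrow> length x \<le> length y"
  shows "\<exists>a b. a \<ge> 0 \<and> b \<ge> 0 \<and> A x (simple_root s) = lc a (simple_root s) b (simple_root s')"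
proof -
  have nd: "\<forall>p t q. x \<noteq> p @ t # t # q"
  proof (intro allI notI)
    fix p t q assume xe: "x = p @ t # t # q"
    then have t: "t < n" using xI ss by auto
    have "A (p @ q) = A x" using xe t by (auto simp: act_append SS)
    moreover have "set (p @ q) \<subseteq> {s, s'}" using xI xe by auto
    ultimately have "length x \<le> length (p @ q)" using ha by blast
    then show False using xe by simp
  qed
  have lx: "x = [] \<or> last x = s'"
  proof (rule ccontr)
    assume "\<not> (x = [] \<or> last x = s')"
    then have ne: "x \<noteq> []" and "last x \<noteq> s'" by auto
    then have ls: "last x = s" using xI last_in_set[OF ne] by blast
    then have xe: "x = butlast x @ [s]" using ne append_butlast_last_id[OF ne] by simp
    have "A (butlast x) = (\<lambda>v. A x (S s v))"
      by (rule ext, subst xe) (simp add: act_append SS ss)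
    moreover have "set (butlast x) \<subseteq> {s, s'}" using xI by (meson in_set_butlastD subsetD subsetI)
    ultimately have "length x \<le> length (butlast x)" using hb by blast
    moreover have "length (butlast x) < length x" using ne by (simp add: length_butlast)
    ultimately show False by linarith
  qed
  define k where "k = length x"
  have xa: "x = altw s s' k" using alt_char[OF xI nd lx] k_def by simp
  have short: "k < m" if m1: "m \<ge> 1" and br: "\<And>v. A (altw s s' m) v = A (altw s' s m) v" for m
  proof (rule ccontr)
    assume "\<not> k < m"
    then obtain y where y1: "set y \<subseteq> {s, s'}" and y2: "length y < k" and y3: "A y = (\<lambda>v. A (altw s s' k) (S s v))"
      using braid_short[OF ss(2) m1 br] by (meson not_less)
    have "length x \<le> length y" using hb[OF y1] y3 xa by simp
    then show False using y2 k_def by simp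
  qed
  have E2: "\<forall>i<n. \<forall>j<n. i \<noteq> j \<longrightarrow> M i j \<le> 0"
    and E3: "\<forall>i<n. \<forall>j<n. M i j \<noteq> 0 \<longleftrightarrow> M j i \<noteq> 0"
    and E4: "\<forall>i<n. \<forall>j<n. M i j * M j i \<noteq> 0 \<longrightarrow>
         (M i j * M j i \<ge> 4 \<or> (\<exists>m::nat. m \<ge> 3 \<and> M i j * M j i = 4 * (cos (pi / real m))^2))"
    using E unfolding is_EGCM_def by blast+
  have Eg1: "M s s' \<le> 0" using E2 ss by simp
  have Eg2: "M s' s \<le> 0" using E2 ss by simp
  have Eg3: "M s s' \<noteq> 0 \<longleftrightarrow> M s' s \<noteq> 0" using E3 ss by simp
  have Eg4: "M s s' * M s' s \<noteq> 0 \<longrightarrow> (M s s' * M s' s \<ge> 4 \<or> (\<exists>m::nat. m \<ge> 3 \<and> M s s' * M s' s = 4 * (cos (pi / real m))^2))"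
    using E4 ss by simp
  have nnc: "\<exists>a b. a \<ge> 0 \<and> b \<ge> 0 \<and> A x (simple_root s) = lc a (simple_root s) b (simple_root s')"
    if c0: "c > 0" and cc: "c * c = M s s' * M s' s" and pos: "\<And>j. j \<le> k \<Longrightarrow> cheb c j \<ge> 0 \<and> cheb c (Suc j) \<ge> 0" for c
  proof -
    have v: "A x (simple_root s) = (if even k then lc (cheb c (Suc k)) (simple_root s) (- M s' s / c * cheb c k) (simple_root s')
     else lc (cheb c k) (simple_root s) (- M s' s / c * cheb c (Suc k)) (simple_root s'))"
      unfolding xa by (rule alt_vec[OF ss c0 cc])
    have bc: "- M s' s / c \<ge> 0" using Eg2 c0 by (simp add: divide_nonpos_pos)
    have p1: "cheb c k \<ge> 0" and p2: "cheb c (Suc k) \<ge> 0" using pos[of k] by auto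
    show ?thesis
    proof (cases "even k")
      case True
      have "A x (simple_root s) = lc (cheb c (Suc k)) (simple_root s) (- M s' s / c * cheb c k) (simple_root s')"
        using v True by simp
      moreover have "0 \<le> - M s' s / c * cheb c k" using bc p1 by (rule mult_nonneg_nonneg)
      ultimately show ?thesis using p2 by blast
    next
      case False
      have "A x (simple_root s) = lc (cheb c k) (simple_root s) (- M s' s / c * cheb c (Suc k)) (simple_root s')"
        using v False by simp
      moreover have "0 \<le> - M s' s / c * cheb c (Suc k)" using bc p2 by (rule mult_nonneg_nonneg)
      ultimately show ?thesis using p1 by blast
    qed
  qed
  show ?thesis
  proof (cases "M s s' = 0")
    case True
    then have z: "M s' s = 0" using Eg3 by simp
    have "k < 2"
    proof (rule short)
      fix v show "A (altw s s' 2) v = A (altw s' s 2) v"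
        using braid2[OF ss True z] by (simp add: numeral_2_eq_2)
    qed simp
    then have "x = [] \<or> x = [s']" using xa by (cases k) (auto simp: numeral_2_eq_2 less_Suc_eq)
    moreover have "S s' (simple_root s) = simple_root s"
      using ss z by (simp add: refl_act_cr cr_simple)
    ultimately have "A x (simple_root s) = lc 1 (simple_root s) 0 (simple_root s')"
      by (auto simp: lc_def)
    moreover have "(0::real) \<le> 1" "(0::real) \<le> 0" by simp_all
    ultimately show ?thesis by blast
  next
    case False
    then have nz: "M s s' * M s' s \<noteq> 0" using Eg3 by simp
    show ?thesis
    proof (cases "M s s' * M s' s \<ge> 4")
      case True
      define c where "c = sqrt (M s s' * M s' s)"
      have c2: "c \<ge> 2" unfolding c_def using True real_sqrt_le_mono[of 4] by simp
      show ?thesis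
      proof (rule nnc)
        show "c > 0" using c2 by simp
        show "c * c = M s s' * M s' s" unfolding c_def using True by simp
        fix j show "cheb c j \<ge> 0 \<and> cheb c (Suc j) \<ge> 0" using cheb_ge2[OF c2, of j] cheb_ge2[OF c2, of "Suc j"] by simp
      qed
    next
      case False
      then obtain m :: nat where m3: "m \<ge> 3" and mc: "M s s' * M s' s = 4 * (cos (pi / real m))^2"
        using Eg4 nz by auto
      have km: "k < m"
        by (rule short) (use m3 braid_cos[OF ss m3 mc] in auto)
      define t where "t = pi / real m"
      define c where "c = 2 * cos t"
      have t0: "0 < t" and t1: "t < pi / 2" using m3 by (auto simp: t_def field_simps)
      have c0: "c > 0" unfolding c_def using t0 t1 by (simp add: cos_gt_zero)
      have st: "sin t > 0" using t0 t1 sin_gt_zero[of t] by linarith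
      show ?thesis
      proof (rule nnc)
        show "c > 0" by (rule c0)
        show "c * c = M s s' * M s' s" using mc by (simp add: c_def t_def power2_eq_square)
        fix j assume j: "j \<le> k"
        have "cheb c i \<ge> 0" if "i \<le> m" for i
        proof -
          have "real i * t \<le> pi" using that m3 by (simp add: t_def field_simps)
          moreover have "0 \<le> real i * t" using t0 by simp
          ultimately have "sin (real i * t) \<ge> 0" by (simp add: sin_ge_zero)
          then show ?thesis unfolding c_def using st by (simp add: cheb_sin)
        qed
        then show "cheb c j \<ge> 0 \<and> cheb c (Suc j) \<ge> 0" using j km by simp
      qed
    qed
  qed
qed

end



context egcm begin

definition reduced :: "nat list \<Rightarrow> bool" where
  "reduced xs \<longleftrightarrow> wd xs \<and> (\<forall>ys. wd ys \<longrightarrow> A ys = A xs \<longrightarrow> length xs \<le> length ys)"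

lemma nonneg_simple: "nonneg (simple_root i)"
  by (simp add: nonneg_def simple_root_def)

lemma nonneg_lc: "a \<ge> 0 \<Longrightarrow> b \<ge> 0 \<Longrightarrow> nonneg u \<Longrightarrow> nonneg v \<Longrightarrow> nonneg (lc a u b v)"
  by (simp add: nonneg_def lc_def)

lemma pos_main:
  "length xs = r \<Longrightarrow> reduced xs \<Longrightarrow> s < n \<Longrightarrow>
   (\<forall>ys. wd ys \<longrightarrow> A ys = (\<lambda>v. A xs (S s v)) \<longrightarrow> length xs \<le> length ys) \<Longrightarrow>
   nonneg (A xs (simple_root s))"
proof (induction r arbitrary: xs s rule: less_induct)
  case (less r)
  note red = less.prems(2) and sn = less.prems(3) and hyp = less.prems(4)
  show ?case
  proof (cases xs rule: rev_exhaust)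
    case Nil then show ?thesis by (simp add: nonneg_simple)
  next
    case (snoc ys s')
    have wdxs: "wd xs" using red unfolding reduced_def by blast
    then have sx: "set xs \<subseteq> {..<n}" by (simp add: wd_def)
    then have s'n: "s' < n" using snoc by auto
    have wdys: "wd ys" using sx snoc unfolding wd_def by auto
    have ne: "s' \<noteq> s"
    proof
      assume "s' = s"
      then have "A ys = (\<lambda>v. A xs (S s v))" using snoc sn by (auto simp: act_append SS)
      then have "length xs \<le> length ys" using hyp wdys by blast
      then show False using snoc by simp
    qed
    define P where "P = (\<lambda>(zs, x). wd zs \<and> set x \<subseteq> {s, s'} \<and> (\<forall>v. A zs (A x v) = A xs v) \<and> length zs + length x = length xs)"
    have P0: "P (ys, [s'])" using snoc wdys by (simp add: P_def act_append)
    obtain zx where Pzx: "P zx" and zmin: "\<And>q. P q \<Longrightarrow> length (fst zx) \<le> length (fst q)"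
      using ex_has_least_nat[of P "(ys, [s'])" "\<lambda>q. length (fst q)", OF P0] by blast
    obtain zs x where zx: "zx = (zs, x)" by (cases zx)
    have wdzs: "wd zs" and xI: "set x \<subseteq> {s, s'}" and zxA: "\<And>v. A zs (A x v) = A xs v"
      and zxl: "length zs + length x = length xs"
      using Pzx zx by (auto simp: P_def)
    have wdx: "wd x" using xI sn s'n by (auto simp: wd_def)
    have lzs: "length zs < r"
    proof -
      have "length zs \<le> length ys" using zmin[OF P0] zx by simp
      then show ?thesis using snoc less.prems(1) by simp
    qed
    have redzs: "reduced zs"
      unfolding reduced_def
    proof (intro conjI allI impI)
      show "wd zs" by (rule wdzs)
      fix ws assume "wd ws" "A ws = A zs"
      then have "wd (ws @ x)" "A (ws @ x) = A xs"
        using wdx zxA by (auto simp: wd_def act_append)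
      then have "length xs \<le> length (ws @ x)" using red unfolding reduced_def by blast
      then show "length zs \<le> length ws" using zxl by simp
    qed
    have hypt: "\<forall>ws. wd ws \<longrightarrow> A ws = (\<lambda>v. A zs (S t v)) \<longrightarrow> length zs \<le> length ws"
      if t: "t \<in> {s, s'}" for t
    proof (intro allI impI)
      fix ws assume wws: "wd ws" and Aws: "A ws = (\<lambda>v. A zs (S t v))"
      have tn: "t < n" using t sn s'n by auto
      have act: "A ws (A (t # x) v) = A xs v" for v
        using Aws tn zxA by (simp add: SS)
      have "wd (ws @ t # x)" using wws wdx tn by (auto simp: wd_def)
      moreover have "A (ws @ t # x) = A xs" using act by (auto simp: act_append simp del: act.simps)
      ultimately have "length xs \<le> length (ws @ t # x)" using red unfolding reduced_def by blast
      show "length zs \<le> length ws"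
      proof (rule ccontr)
        assume "\<not> length zs \<le> length ws"
        then have "length ws + length (t # x) \<le> length xs" using zxl by simp
        then have "length ws + length (t # x) = length xs"
          using \<open>length xs \<le> length (ws @ t # x)\<close> by simp
        then have "P (ws, t # x)" using wws xI t act by (auto simp: P_def)
        then have "length zs \<le> length ws" using zmin zx by fastforce
        then show False using \<open>\<not> length zs \<le> length ws\<close> by simp
      qed
    qed
    have n1: "nonneg (A zs (simple_root s))"
      by (rule less.IH[OF lzs refl redzs sn hypt]) simp
    have n2: "nonneg (A zs (simple_root s'))"
      by (rule less.IH[OF lzs refl redzs s'n hypt]) simp
    have ha: "length x \<le> length y" if "set y \<subseteq> {s, s'}" "A y = A x" for y
    proof -
      have "wd (zs @ y)" using that wdzs sn s'n by (auto simp: wd_def)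
      moreover have "A (zs @ y) = A xs" using that zxA by (auto simp: act_append)
      ultimately have "length xs \<le> length (zs @ y)" using red unfolding reduced_def by blast
      then show ?thesis using zxl by simp
    qed
    have hb: "length x \<le> length y" if "set y \<subseteq> {s, s'}" "A y = (\<lambda>v. A x (S s v))" for y
    proof -
      have "wd (zs @ y)" using that wdzs sn s'n by (auto simp: wd_def)
      moreover have "A (zs @ y) = (\<lambda>v. A xs (S s v))" using that zxA by (auto simp: act_append)
      ultimately have "length xs \<le> length (zs @ y)" using hyp by blast
      then show ?thesis using zxl by simp
    qed
    obtain a b where ab: "a \<ge> 0" "b \<ge> 0" "A x (simple_root s) = lc a (simple_root s) b (simple_root s')"
      using R2[OF ne[symmetric] sn s'n xI ha hb] by blast
    have "A xs (simple_root s) = lc a (A zs (simple_root s)) b (A zs (simple_root s'))"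
      using zxA[of "simple_root s"] ab(3) by (simp add: act_lc)
    then show ?thesis using nonneg_lc[OF ab(1,2) n1 n2] by simp
  qed
qed

end



lemma foldr_act: "foldr (\<lambda>t v. refl_act n M (s t) v) xs v = act n M (map s xs) v"
  by (induction xs) auto

lemma rf_fire:
  assumes "i < n"
  shows "root_functional n c (fire M i mu) = root_functional n (refl_act n M i c) mu"
proof -
  have "root_functional n (refl_act n M i c) mu = (\<Sum>j<n. c j * mu j + (if j = i then - cr n M i c * mu i else 0))"
    by (auto simp: root_functional_def refl_act_cr algebra_simps intro!: sum.cong)
  also have "\<dots> = (\<Sum>j<n. c j * mu j) - cr n M i c * mu i"
    using assms by (simp add: sum.distrib)
  also have "\<dots> = root_functional n c (fire M i mu)"
    by (simp add: root_functional_def fire_def cr_def algebra_simps sum_subtractf sum_distrib_left sum_distrib_right)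
  finally show ?thesis by simp
qed

lemma rf_simple: "i < n \<Longrightarrow> root_functional n (simple_root i) mu = mu i"
proof -
  assume i: "i < n"
  have "root_functional n (simple_root i) mu = (\<Sum>j<n. if j = i then mu i else 0)"
    unfolding root_functional_def simple_root_def by (rule sum.cong) auto
  then show ?thesis using i by simp
qed

context egcm begin

lemma ex_reduced: "wd w \<Longrightarrow> \<exists>xs. reduced xs \<and> A xs = A w \<and> length xs \<le> length w"
proof -
  assume w: "wd w"
  define Q where "Q = (\<lambda>xs. wd xs \<and> A xs = A w)"
  have "Q w" using w by (simp add: Q_def)
  then obtain xs where Qx: "Q xs" and mn: "\<And>ys. Q ys \<Longrightarrow> length xs \<le> length ys"
    using ex_has_least_nat[of Q w length] by blast
  have "reduced xs" using Qx mn unfolding reduced_def Q_def by auto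
  moreover have "length xs \<le> length w" using mn \<open>Q w\<close> by blast
  ultimately show ?thesis using Qx Q_def by blast
qed

lemma coherent:
  assumes w: "wd w" and i: "i < n"
  shows "nonneg (A w (simple_root i)) \<or> nonpos (A w (simple_root i))"
proof -
  obtain xs where rx: "reduced xs" and ax: "A xs = A w" using ex_reduced[OF w] by blast
  show ?thesis
  proof (cases "\<forall>ys. wd ys \<longrightarrow> A ys = (\<lambda>v. A xs (S i v)) \<longrightarrow> length xs \<le> length ys")
    case True
    then have "nonneg (A xs (simple_root i))" using pos_main[OF refl rx i] by blast
    then show ?thesis using ax by simp
  next
    case False
    then obtain ys where wys: "wd ys" and ays: "A ys = (\<lambda>v. A xs (S i v))" and lys: "length ys < length xs"
      by (auto simp: not_le)
    obtain zs where rz: "reduced zs" and az: "A zs = A ys" and lz: "length zs \<le> length ys"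
      using ex_reduced[OF wys] by blast
    have hz: "\<forall>us. wd us \<longrightarrow> A us = (\<lambda>v. A zs (S i v)) \<longrightarrow> length zs \<le> length us"
    proof (intro allI impI)
      fix us assume wus: "wd us" and aus: "A us = (\<lambda>v. A zs (S i v))"
      have "A us = A xs" unfolding aus az ays using i by (simp add: SS)
      then have "length xs \<le> length us" using rx wus unfolding reduced_def by blast
      then show "length zs \<le> length us" using lz lys by simp
    qed
    have nz: "nonneg (A zs (simple_root i))" using pos_main[OF refl rz i hz] .
    have "A w (simple_root i) = A xs (S i (S i (simple_root i)))" using ax i by (simp add: SS)
    also have "\<dots> = A zs (S i (simple_root i))" using az ays by simp
    also have "\<dots> = (\<lambda>l. - A zs (simple_root i) l)" using i by (simp add: S_simple act_neg)
    finally show ?thesis using nz by (simp add: nonneg_def nonpos_def)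
  qed
qed

lemma supp: "wd xs \<Longrightarrow> (\<forall>i\<ge>n. v i = 0) \<Longrightarrow> \<forall>i\<ge>n. A xs v i = 0"
  by (induction xs) (auto simp: wd_def refl_act_def)

end




lemma transport:
  assumes "\<And>u. u < t + d \<Longrightarrow> s u < n"
  shows "root_functional n (act n M (map s [t..<t+d]) v) (play M lam s t) = root_functional n v (play M lam s (t + d))"
  using assms
proof (induction d arbitrary: v)
  case 0 then show ?case by simp
next
  case (Suc d)
  have "root_functional n (act n M (map s [t..<t + Suc d]) v) (play M lam s t)
      = root_functional n (act n M (map s [t..<t + d]) (refl_act n M (s (t + d)) v)) (play M lam s t)"
    by (simp add: act_append)
  also have "\<dots> = root_functional n (refl_act n M (s (t + d)) v) (play M lam s (t + d))"
    using Suc by simp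
  also have "\<dots> = root_functional n v (play M lam s (t + Suc d))"
    using Suc.prems[of "t + d"] by (simp add: rf_fire)
  finally show ?case .
qed

theorem proposition5p4:
  fixes n :: nat and M :: "nat \<Rightarrow> nat \<Rightarrow> real" and lam :: "nat \<Rightarrow> real"
    and L :: enat and s :: "nat \<Rightarrow> nat"
  assumes "is_EGCM n M"
    and "strongly_dominant n lam"
    and "game_sequence n M lam L s"
  shows "\<forall>j k. j < k \<and> enat k < L \<longrightarrow>
           root_functional n (beta n M s k) \<noteq> root_functional n (beta n M s j)"
proof (intro allI impI notI)
  interpret egcm n M by (rule egcm.intro) (rule assms(1))
  fix j k
  assume jk: "j < k \<and> enat k < L" and eq: "root_functional n (beta n M s k) = root_functional n (beta n M s j)"
  have legal: "s t < n \<and> play M lam s t (s t) > 0" if "t \<le> k" for t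
  proof -
    have "enat t < L" using jk that by (meson enat_ord_simps(1) le_less_trans)
    then show ?thesis using assms(3) unfolding game_sequence_def by blast
  qed
  have sn: "s t < n" if "t \<le> k" for t using legal[OF that] by simp
  have wdr: "wd (map s [a..<b])" if "b \<le> Suc k" for a b
    using sn that by (auto simp: wd_def)
  define al where "al = simple_root (s k)"
  define del where "del = (\<lambda>t. A (map s [t..<k]) al)"
  have bk: "beta n M s k = A (map s [0..<j]) (del j)"
  proof -
    have "[0..<k] = [0..<j] @ [j..<k]" using jk upt_add_eq_append[of 0 j "k - j"] by simp
    then show ?thesis by (simp add: beta_def foldr_act del_def al_def act_append)
  qed
  have bj: "beta n M s j = A (map s [0..<j]) (simple_root (s j))"
    by (simp add: beta_def foldr_act)
  have suppv: "\<forall>i\<ge>n. beta n M s m i = 0" if "m \<le> k" for m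
  proof -
    have "\<forall>i\<ge>n. simple_root (s m) i = 0" using sn[OF that] by (simp add: simple_root_def)
    then show ?thesis unfolding beta_def foldr_act using supp[OF wdr] that by simp
  qed
  have beq: "beta n M s k = beta n M s j"
  proof
    fix i
    show "beta n M s k i = beta n M s j i"
    proof (cases "i < n")
      case True
      have "root_functional n (beta n M s k) (simple_root i) = root_functional n (beta n M s j) (simple_root i)"
        using eq by simp
      moreover have "root_functional n c (simple_root i) = c i" for c
      proof -
        have "root_functional n c (simple_root i) = (\<Sum>l<n. if l = i then c i else 0)"
          unfolding root_functional_def simple_root_def by (rule sum.cong) auto
        then show ?thesis using True by simp
      qed
      ultimately show ?thesis by simp
    next
      case False
      then show ?thesis using suppv[of k] suppv[of j] jk by simp
    qed
  qed
  have dj: "del j = simple_root (s j)"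
    using act_inj[OF wdr[of j 0]] bk bj beq jk by simp
  have dstep: "del t = S (s t) (del (Suc t))" if "t < k" for t
    using that by (simp add: del_def upt_conv_Cons)
  have dj1: "del (Suc j) = (\<lambda>l. - simple_root (s j) l)"
  proof -
    have "del (Suc j) = S (s j) (del j)" using dstep[of j] jk sn[of j] by (simp add: SS)
    then show ?thesis using dj S_simple sn[of j] jk by simp
  qed
  have rfd: "root_functional n (del t) (play M lam s t) = play M lam s k (s k)" if "t \<le> k" for t
  proof -
    have "root_functional n (del t) (play M lam s t) = root_functional n al (play M lam s (t + (k - t)))"
      unfolding del_def using transport[of t "k - t" s n M al lam] that sn by simp
    also have "\<dots> = play M lam s k (s k)" using that sn[of k] by (simp add: al_def rf_simple)
    finally show ?thesis .
  qed
  define T where "T = {t. j < t \<and> t \<le> k \<and> \<not> nonneg (del t)}"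
  have finT: "finite T" unfolding T_def by (rule finite_subset[of _ "{..k}"]) auto
  have "Suc j \<in> T" using jk dj1 by (auto simp: T_def nonneg_def simple_root_def intro!: exI[of _ "s j"])
  then have neT: "T \<noteq> {}" by blast
  define t0 where "t0 = Max T"
  have t0T: "t0 \<in> T" using finT neT by (simp add: t0_def)
  have dk: "nonneg (del k)" by (simp add: del_def al_def nonneg_simple)
  have t0k: "t0 < k" using t0T dk by (auto simp: T_def le_less)
  have nn: "nonneg (del (Suc t0))"
  proof (rule ccontr)
    assume "\<not> nonneg (del (Suc t0))"
    then have "Suc t0 \<in> T" using t0T t0k by (auto simp: T_def)
    then have "Suc t0 \<le> t0" using finT by (simp add: t0_def)
    then show False by simp
  qed
  have np: "nonpos (del t0)"
    using coherent[OF wdr[of k t0], of "s k"] t0T sn[of k] by (auto simp: T_def del_def al_def)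
  define i0 where "i0 = s t0"
  have i0n: "i0 < n" using sn[of t0] t0k by (simp add: i0_def)
  have zero: "del (Suc t0) l = 0" if "l \<noteq> i0" for l
  proof -
    have "del t0 l = del (Suc t0) l" using dstep[OF t0k] that by (simp add: refl_act_def i0_def)
    then show ?thesis using nn np by (metis nonneg_def nonpos_def order_antisym)
  qed
  have "root_functional n (del (Suc t0)) (play M lam s (Suc t0)) = (\<Sum>l<n. if l = i0 then del (Suc t0) i0 * play M lam s (Suc t0) i0 else 0)"
    unfolding root_functional_def by (rule sum.cong) (auto simp: zero)
  also have "\<dots> = del (Suc t0) i0 * play M lam s (Suc t0) i0" using i0n by simp
  also have "play M lam s (Suc t0) i0 = - play M lam s t0 i0"
    using i0n by (simp add: fire_def i0_def Mdiag)
  finally have "root_functional n (del (Suc t0)) (play M lam s (Suc t0)) = - (del (Suc t0) i0 * play M lam s t0 i0)" by simp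
  moreover have "del (Suc t0) i0 * play M lam s t0 i0 \<ge> 0"
    using nn legal[of t0] t0k by (simp add: nonneg_def i0_def)
  moreover have "root_functional n (del (Suc t0)) (play M lam s (Suc t0)) > 0"
    using rfd[of "Suc t0"] t0k legal[of k] by simp
  ultimately show False by simp
qed


end
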